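(* $\mathfrak{L}(SL(2,\mathbb{Z})) \subsetneq \mathfrak{L}(SL(3,\mathbb{Z}))$.
   Context: For a group $G$ with identity $e$, a $G$-automaton is a tuple $(Q,\Sigma,G,\delta,q_0,Q_a)$ where $Q$ is a finite set of states, $\Sigma$ a finite input alphabet, $q_0\in Q$ the initial state, $Q_a\subseteq Q$ the accepting states, and $\delta$ assigns to each $(q,\sigma)\in Q\times(\Sigma\cup\{\varepsilon\})$ a finite set of pairs $(q',m)\in Q\times G$. The register holds an element of $G$, initially $e$; using a transition $(q',m)\in\delta(q,\sigma)$ the automaton reads $\sigma$ (or nothing if $\sigma=\varepsilon$), moves to $q'$ and replaces the register content $x$ by $xm$. A word is accepted if some computation reads it entirely and ends in an accepting state with register equal to $e$. $\mathfrak{L}(G)$ is the class of languages recognized by $G$-automata. $SL(n,\mathbb{Z})$ is the group of $n\times n$ integer matrices of determinant $1$. *)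

theory Defs
  imports "HOL-Analysis.Analysis"
begin

text \<open>A group G is given by its multiplication, identity and carrier.
  The special linear group SL(n,Z) is rendered on integer matrices int^'n^'n
  with carrier {A. det A = 1}, product (**), identity mat 1.\<close>

definition SL_carrier :: "(int^'n^'n) set" where
  "SL_carrier = {A. det A = 1}"

text \<open>A G-automaton with states in nat and input letters in nat.
  Transitions: a finite set of tuples (q, s, q', m), where s = None means an
  epsilon move and s = Some a means reading the letter a; m is the group element
  by which the register is right-multiplied.\<close>

definition G_automaton ::
  "'g set \<Rightarrow> nat set \<Rightarrow> nat set \<Rightarrow> (nat \<times> nat option \<times> nat \<times> 'g) set \<Rightarrow> nat \<Rightarrow> nat set \<Rightarrow> bool"
  where
  "G_automaton Gc Q \<Sigma> \<delta> q0 Qa \<longleftrightarrow>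
     finite Q \<and> finite \<Sigma> \<and> q0 \<in> Q \<and> Qa \<subseteq> Q \<and> finite \<delta> \<and>
     (\<forall>(q, s, q', m) \<in> \<delta>. q \<in> Q \<and> q' \<in> Q \<and> m \<in> Gc \<and>
        (case s of None \<Rightarrow> True | Some a \<Rightarrow> a \<in> \<Sigma>))"

text \<open>reach gmul e delta q0 q w x: starting in q0 with register e, some computation
  reads exactly w and ends in state q with register x.\<close>
inductive reach ::
  "('g \<Rightarrow> 'g \<Rightarrow> 'g) \<Rightarrow> 'g \<Rightarrow> (nat \<times> nat option \<times> nat \<times> 'g) set \<Rightarrow> nat \<Rightarrow> nat \<Rightarrow> nat list \<Rightarrow> 'g \<Rightarrow> bool"
  for gmul e \<delta> q0 where
  start: "reach gmul e \<delta> q0 q0 [] e"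
| read: "reach gmul e \<delta> q0 q w x \<Longrightarrow> (q, Some a, q', m) \<in> \<delta> \<Longrightarrow>
           reach gmul e \<delta> q0 q' (w @ [a]) (gmul x m)"
| eps: "reach gmul e \<delta> q0 q w x \<Longrightarrow> (q, None, q', m) \<in> \<delta> \<Longrightarrow>
           reach gmul e \<delta> q0 q' w (gmul x m)"

definition accepted_lang ::
  "('g \<Rightarrow> 'g \<Rightarrow> 'g) \<Rightarrow> 'g \<Rightarrow> (nat \<times> nat option \<times> nat \<times> 'g) set \<Rightarrow> nat \<Rightarrow> nat set \<Rightarrow> nat list set"
  where
  "accepted_lang gmul e \<delta> q0 Qa = {w. \<exists>q\<in>Qa. reach gmul e \<delta> q0 q w e}"

text \<open>The class \<L>(G) of languages (over finite alphabets of natural-number letters)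
  recognised by G-automata.\<close>
definition lang_class ::
  "'g set \<Rightarrow> ('g \<Rightarrow> 'g \<Rightarrow> 'g) \<Rightarrow> 'g \<Rightarrow> nat list set set" where
  "lang_class Gc gmul e =
     {L. \<exists>Q \<Sigma> \<delta> q0 Qa. G_automaton Gc Q \<Sigma> \<delta> q0 Qa \<and> L = accepted_lang gmul e \<delta> q0 Qa}"

abbreviation lang_SL :: "('n::finite) itself \<Rightarrow> nat list set set" where
  "lang_SL (_ :: 'n itself) \<equiv> lang_class (SL_carrier :: (int^'n^'n) set) (**) (mat 1)"

end

theory Submission
  imports Defs "HOL-Library.Sublist"
begin

(* ---- part M2 ---- *)
definition mk2 :: "int \<Rightarrow> int \<Rightarrow> int \<Rightarrow> int \<Rightarrow> int^2^2" where
  "mk2 a b c d = (\<chi> i j. if i = 1 then (if j = 1 then a else b) else (if j = 1 then c else d))"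

lemma mk2_nth[simp]: "mk2 a b c d $ 1 $ 1 = a" "mk2 a b c d $ 1 $ 2 = b"
  "mk2 a b c d $ 2 $ 1 = c" "mk2 a b c d $ 2 $ 2 = d"
  by (simp_all add: mk2_def)

lemma mk2_eta: "M = mk2 (M$1$1) (M$1$2) (M$2$1) (M$2$2)"
  unfolding vec_eq_iff forall_2 by simp

lemma mk2_eq[simp]: "mk2 a b c d = mk2 a' b' c' d' \<longleftrightarrow> a = a' \<and> b = b' \<and> c = c' \<and> d = d'"
  unfolding vec_eq_iff forall_2 by simp

lemma mk2_mult[simp]: "mk2 a b c d ** mk2 a' b' c' d' = mk2 (a*a' + b*c') (a*b' + b*d') (c*a' + d*c') (c*b'+d*d')"
  unfolding vec_eq_iff forall_2 by (simp add: matrix_matrix_mult_def sum_2)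

lemma mk2_one: "(mat 1 :: int^2^2) = mk2 1 0 0 1"
  unfolding vec_eq_iff forall_2 by (simp add: mat_def)

lemma mk2_det[simp]: "det (mk2 a b c d) = a*d - b*c"
  by (simp add: det_2)

(* ---- part G2 ---- *)
type_synonym gen = "bool \<times> bool"

definition gm :: "gen \<Rightarrow> int^2^2" where
  "gm g = (if fst g then mk2 1 0 (if snd g then -2 else 2) 1 else mk2 1 (if snd g then -2 else 2) 0 1)"

definition ginv :: "gen \<Rightarrow> gen" where "ginv g = (fst g, \<not> snd g)"

lemma ginv_ginv[simp]: "ginv (ginv g) = g" by (simp add: ginv_def)

lemma gm_inv[simp]: "gm g ** gm (ginv g) = mat 1"
  by (cases g) (auto simp: gm_def ginv_def mk2_one)

lemma det_gm[simp]: "det (gm g) = 1" by (simp add: gm_def)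

fun evl :: "gen list \<Rightarrow> int^2^2" where
  "evl [] = mat 1"
| "evl (g # gs) = gm g ** evl gs"

lemma evl_append: "evl (xs @ ys) = evl xs ** evl ys"
  by (induction xs) (auto simp: matrix_mul_assoc)

lemma det_evl[simp]: "det (evl ws) = 1"
  by (induction ws) (auto simp: det_mul)

definition app :: "int^2^2 \<Rightarrow> int \<times> int \<Rightarrow> int \<times> int" where
  "app M v = (M$1$1 * fst v + M$1$2 * snd v, M$2$1 * fst v + M$2$2 * snd v)"

lemma app_mult: "app (M ** N) v = app M (app N v)"
  apply (subst (1 2) mk2_eta[of M]) apply (subst (1 2) mk2_eta[of N])
  by (simp add: app_def algebra_simps)

lemma app_one: "app (mat 1) v = v" by (simp add: app_def mk2_one)

definition preg :: "gen \<Rightarrow> (int \<times> int) set" where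
  "preg g = (if fst g then {(x,y). \<bar>y\<bar> > \<bar>x\<bar> \<and> (if snd g then (x < 0 \<and> 0 < y \<or> 0 < x \<and> y < 0) else (0 < x \<and> 0 < y \<or> x < 0 \<and> y < 0))}
            else {(x,y). \<bar>x\<bar> > \<bar>y\<bar> \<and> (if snd g then (x < 0 \<and> 0 < y \<or> 0 < x \<and> y < 0) else (0 < x \<and> 0 < y \<or> x < 0 \<and> y < 0))})"

definition pdom :: "gen \<Rightarrow> (int \<times> int) set" where
  "pdom g = (if fst g then {(x,y). \<bar>x\<bar> > \<bar>y\<bar>} else {(x,y). \<bar>y\<bar> > \<bar>x\<bar>}) \<union> preg g"

lemma pp_step: "v \<in> pdom g \<Longrightarrow> app (gm g) v \<in> preg g"
  by (cases v; cases g) (auto simp: pdom_def preg_def gm_def app_def split: if_splits)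

lemma reg_dom: "h \<noteq> ginv g \<Longrightarrow> preg h \<subseteq> pdom g"
  by (cases g; cases h) (auto simp: pdom_def preg_def ginv_def)

lemma pp: "successively (\<lambda>g h. h \<noteq> ginv g) ws \<Longrightarrow> ws \<noteq> [] \<Longrightarrow> v \<in> pdom (last ws) \<Longrightarrow> app (evl ws) v \<in> preg (hd ws)"
proof (induction ws)
  case Nil then show ?case by simp
next
  case (Cons g ws)
  show ?case
  proof (cases ws)
    case Nil
    then show ?thesis using Cons.prems pp_step[of v g] by (simp add: app_mult app_one)
  next
    case (Cons h ws')
    have s: "successively (\<lambda>g h. h \<noteq> ginv g) ws" "h \<noteq> ginv g"
      using Cons.prems(1) Cons by auto
    have "app (evl ws) v \<in> preg h" using Cons.IH[OF s(1)] Cons.prems Cons by simp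
    then have "app (evl ws) v \<in> pdom g" using reg_dom[OF s(2)] by auto
    then show ?thesis by (simp add: app_mult pp_step)
  qed
qed

lemma free: "successively (\<lambda>g h. h \<noteq> ginv g) ws \<Longrightarrow> evl ws = mat 1 \<Longrightarrow> ws = []"
proof (rule ccontr)
  assume s: "successively (\<lambda>g h. h \<noteq> ginv g) ws" and e: "evl ws = mat 1" and ne: "ws \<noteq> []"
  define v :: "int \<times> int" where "v = (if fst (last ws) then (1,0) else (0,1))"
  have "v \<in> pdom (last ws)" unfolding v_def pdom_def by auto
  from pp[OF s ne this] have "v \<in> preg (hd ws)" using e by (simp add: app_one)
  then show False unfolding v_def preg_def by (auto split: if_splits)
qed

(* ---- part G3 ---- *)
lemma upper: "even b \<Longrightarrow> \<exists>ws. evl ws = mk2 1 b 0 1"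
proof (induction "nat \<bar>b\<bar>" arbitrary: b rule: less_induct)
  case less
  consider "b = 0" | "b > 0" | "b < 0" by linarith
  then show ?case
  proof cases
    case 1 then show ?thesis by (intro exI[of _ "[]"]) (simp add: mk2_one)
  next
    case 2
    then obtain ws where "evl ws = mk2 1 (b - 2) 0 1" using less by fastforce
    then show ?thesis by (intro exI[of _ "(False,False) # ws"]) (simp add: gm_def)
  next
    case 3
    then obtain ws where "evl ws = mk2 1 (b + 2) 0 1" using less by fastforce
    then show ?thesis by (intro exI[of _ "(False,True) # ws"]) (simp add: gm_def)
  qed
qed

lemma sanov: "a * d - b * c = 1 \<Longrightarrow> a mod 4 = 1 \<Longrightarrow> d mod 4 = 1 \<Longrightarrow> even b \<Longrightarrow> even c \<Longrightarrow>
  \<exists>ws. evl ws = mk2 a b c d"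
proof (induction "nat (\<bar>a\<bar> + \<bar>c\<bar>)" arbitrary: a b c d rule: less_induct)
  case less
  have oa: "odd a" using less.prems(2) by presburger
  show ?case
  proof (cases "c = 0")
    case True
    then have "a * d = 1" using less.prems by simp
    then have "a = 1 \<and> d = 1 \<or> a = -1 \<and> d = -1" using zmult_eq_1_iff by blast
    then have "a = 1" "d = 1" using less.prems(2) by auto
    then show ?thesis using upper[OF less.prems(4)] True by simp
  next
    case False
    have evc4: "(x + 2 * c) mod 4 = x mod 4" "(x - 2 * c) mod 4 = x mod 4" for x
      using less.prems(5) by presburger+
    have evb4: "(x + 2 * b) mod 4 = x mod 4" "(x - 2 * b) mod 4 = x mod 4" for x
      using less.prems(4) by presburger+
    have neq: "\<bar>a\<bar> \<noteq> \<bar>c\<bar>"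
    proof
      assume "\<bar>a\<bar> = \<bar>c\<bar>"
      then have "a = c \<or> a = - c" by (simp add: abs_eq_iff)
      then show False using oa less.prems(5) by auto
    qed
    have a0: "a \<noteq> 0" using oa by auto
    consider "\<bar>a\<bar> > \<bar>c\<bar>" | "\<bar>a\<bar> < \<bar>c\<bar>" using neq by linarith
    then show ?thesis
    proof cases
      case 1
      show ?thesis
      proof (cases "(a > 0) = (c > 0)")
        case True
        have m: "nat (\<bar>a - 2*c\<bar> + \<bar>c\<bar>) < nat (\<bar>a\<bar> + \<bar>c\<bar>)" using 1 True False by auto
        have "\<exists>ws. evl ws = mk2 (a - 2*c) (b - 2*d) c d"
          by (rule less(1)[of "(a - 2*c)" "c" "d" "(b - 2*d)", OF m]) (use less.prems evc4 in \<open>auto simp: algebra_simps\<close>)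
        then obtain ws where "evl ws = mk2 (a - 2*c) (b - 2*d) c d" by blast
        then show ?thesis by (intro exI[of _ "(False,False) # ws"]) (simp add: gm_def)
      next
        case F: False
        have m: "nat (\<bar>a + 2*c\<bar> + \<bar>c\<bar>) < nat (\<bar>a\<bar> + \<bar>c\<bar>)" using 1 F False by auto
        have "\<exists>ws. evl ws = mk2 (a + 2*c) (b + 2*d) c d"
          by (rule less(1)[of "(a + 2*c)" "c" "d" "(b + 2*d)", OF m]) (use less.prems evc4 in \<open>auto simp: algebra_simps\<close>)
        then obtain ws where "evl ws = mk2 (a + 2*c) (b + 2*d) c d" by blast
        then show ?thesis by (intro exI[of _ "(False,True) # ws"]) (simp add: gm_def)
      qed
    next
      case 2
      show ?thesis
      proof (cases "(a > 0) = (c > 0)")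
        case True
        have m: "nat (\<bar>a\<bar> + \<bar>c - 2*a\<bar>) < nat (\<bar>a\<bar> + \<bar>c\<bar>)" using 2 True a0 by auto
        have "\<exists>ws. evl ws = mk2 a b (c - 2*a) (d - 2*b)"
          by (rule less(1)[of "a" "(c - 2*a)" "(d - 2*b)" "b", OF m]) (use less.prems evb4 in \<open>auto simp: algebra_simps\<close>)
        then obtain ws where "evl ws = mk2 a b (c - 2*a) (d - 2*b)" by blast
        then show ?thesis by (intro exI[of _ "(True,False) # ws"]) (simp add: gm_def)
      next
        case F: False
        have m: "nat (\<bar>a\<bar> + \<bar>c + 2*a\<bar>) < nat (\<bar>a\<bar> + \<bar>c\<bar>)" using 2 F a0 by auto
        have "\<exists>ws. evl ws = mk2 a b (c + 2*a) (d + 2*b)"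
          by (rule less(1)[of "a" "(c + 2*a)" "(d + 2*b)" "b", OF m]) (use less.prems evb4 in \<open>auto simp: algebra_simps\<close>)
        then obtain ws where "evl ws = mk2 a b (c + 2*a) (d + 2*b)" by blast
        then show ?thesis by (intro exI[of _ "(True,True) # ws"]) (simp add: gm_def)
      qed
    qed
  qed
qed

(* ---- part G4 ---- *)
definition res :: "int^2^2 \<Rightarrow> int^2^2" where
  "res M = mk2 (M$1$1 mod 4) (M$1$2 mod 4) (M$2$1 mod 4) (M$2$2 mod 4)"

definition rep :: "int^2^2 \<Rightarrow> int^2^2" where
  "rep M = (if res M = res (mat 1) then mat 1 else (SOME r. det r = 1 \<and> res r = res M))"

definition adj :: "int^2^2 \<Rightarrow> int^2^2" where
  "adj M = mk2 (M$2$2) (- M$1$2) (- M$2$1) (M$1$1)"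

lemma aux_cong: "a mod 4 = a' mod 4 \<Longrightarrow> b mod 4 = b' mod 4 \<Longrightarrow> e mod 4 = e' mod 4 \<Longrightarrow> g mod 4 = g' mod 4
  \<Longrightarrow> (a*e + b*g) mod 4 = (a'*e' + b'*g') mod (4::int)"
  by (metis mod_add_cong mod_mult_cong)

lemma res_mk2: "res (mk2 a b c d) = mk2 (a mod 4) (b mod 4) (c mod 4) (d mod 4)"
  by (simp add: res_def)

lemma res_mult: "res A = res A' \<Longrightarrow> res B = res B' \<Longrightarrow> res (A ** B) = res (A' ** B')"
proof -
  assume h: "res A = res A'" "res B = res B'"
  obtain a b c d where A: "A = mk2 a b c d" using mk2_eta by metis
  obtain a' b' c' d' where A': "A' = mk2 a' b' c' d'" using mk2_eta by metis
  obtain e f g k where B: "B = mk2 e f g k" using mk2_eta by metis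
  obtain e' f' g' k' where B': "B' = mk2 e' f' g' k'" using mk2_eta by metis
  have h1: "a mod 4 = a' mod 4" "b mod 4 = b' mod 4" "c mod 4 = c' mod 4" "d mod 4 = d' mod 4"
    using h(1) unfolding A A' res_mk2 mk2_eq by auto
  have h2: "e mod 4 = e' mod 4" "f mod 4 = f' mod 4" "g mod 4 = g' mod 4" "k mod 4 = k' mod 4"
    using h(2) unfolding B B' res_mk2 mk2_eq by auto
  have "(a*e + b*g) mod 4 = (a'*e' + b'*g') mod 4" by (rule aux_cong) (fact h1 h2)+
  moreover have "(a*f + b*k) mod 4 = (a'*f' + b'*k') mod 4" by (rule aux_cong) (fact h1 h2)+
  moreover have "(c*e + d*g) mod 4 = (c'*e' + d'*g') mod 4" by (rule aux_cong) (fact h1 h2)+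
  moreover have "(c*f + d*k) mod 4 = (c'*f' + d'*k') mod 4" by (rule aux_cong) (fact h1 h2)+
  ultimately show ?thesis unfolding A A' B B' res_mk2 mk2_mult mk2_eq by blast
qed

lemma adj_mk2: "adj (mk2 a b c d) = mk2 d (-b) (-c) a" by (simp add: adj_def)

lemma res_adj: "res A = res A' \<Longrightarrow> res (adj A) = res (adj A')"
proof -
  assume h: "res A = res A'"
  obtain a b c d where A: "A = mk2 a b c d" using mk2_eta by metis
  obtain a' b' c' d' where A': "A' = mk2 a' b' c' d'" using mk2_eta by metis
  have h1: "a mod 4 = a' mod 4" "b mod 4 = b' mod 4" "c mod 4 = c' mod 4" "d mod 4 = d' mod 4"
    using h unfolding A A' res_mk2 mk2_eq by auto
  have "(-b) mod 4 = (-b') mod 4" "(-c) mod 4 = (-c') mod 4" using h1 by (metis mod_minus_eq)+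
  then show ?thesis using h1 unfolding A A' adj_mk2 res_mk2 mk2_eq by blast
qed

lemma adj_right: "det M = 1 \<Longrightarrow> M ** adj M = mat 1"
  apply (subst (asm) mk2_eta[of M]) apply (subst mk2_eta[of M])
  by (simp add: adj_def mk2_one algebra_simps)

lemma adj_left: "det M = 1 \<Longrightarrow> adj M ** M = mat 1"
  apply (subst (asm) mk2_eta[of M]) apply (subst (2) mk2_eta[of M])
  by (simp add: adj_def mk2_one algebra_simps)

lemma det_adj[simp]: "det (adj M) = det M"
  apply (subst (2) mk2_eta[of M]) by (simp add: adj_def algebra_simps)

lemma rep_props: "det M = 1 \<Longrightarrow> det (rep M) = 1 \<and> res (rep M) = res M"
proof (cases "res M = res (mat 1)")
  case True then show ?thesis by (simp add: rep_def mk2_one)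
next
  case False
  assume d: "det M = 1"
  have "\<exists>r. det r = 1 \<and> res r = res M" using d by blast
  then have "det (SOME r. det r = 1 \<and> res r = res M) = 1 \<and> res (SOME r. det r = 1 \<and> res r = res M) = res M"
    by (rule someI_ex)
  then show ?thesis using False by (simp add: rep_def)
qed

lemma rep_cong: "res A = res B \<Longrightarrow> rep A = rep B" by (simp add: rep_def)

lemma rep_one[simp]: "rep (mat 1) = mat 1" by (simp add: rep_def)

lemma finite_range_res: "finite (range res)"
proof -
  have "range res \<subseteq> (\<lambda>(a,b,c,d). mk2 a b c d) ` ({0..3} \<times> {0..3} \<times> {0..3} \<times> {0..3})"
    by (auto simp: res_def image_iff)
  then show ?thesis by (rule finite_subset) auto
qed

lemma finite_range_rep: "finite (range rep)"
proof -
  have "range rep \<subseteq> insert (mat 1) ((\<lambda>R. SOME r. det r = 1 \<and> res r = R) ` range res)"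
    by (auto simp: rep_def)
  then show ?thesis using finite_range_res by (meson finite_imageI finite_insert finite_subset)
qed

lemma jump: assumes "det c = 1" "det m = 1"
  shows "\<exists>ws. ws \<noteq> [] \<and> evl ws = c ** m ** adj (rep (c ** m))"
proof -
  define x where "x = c ** m"
  have dx: "det x = 1" using assms by (simp add: x_def det_mul)
  define g where "g = x ** adj (rep x)"
  have rp: "det (rep x) = 1" "res (rep x) = res x" using rep_props[OF dx] by auto
  have "res g = res (x ** adj x)" unfolding g_def by (rule res_mult) (auto intro: res_adj rp)
  also have "\<dots> = res (mat 1)" using adj_right[OF dx] by simp
  finally have rg: "res g = mk2 1 0 0 1" by (simp add: mk2_one res_def)
  have dg: "det g = 1" unfolding g_def using dx rp by (simp add: det_mul)
  have "\<exists>ws. evl ws = mk2 (g$1$1) (g$1$2) (g$2$1) (g$2$2)"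
  proof (rule sanov)
    show "g$1$1 * g$2$2 - g$1$2 * g$2$1 = 1" using dg by (simp add: det_2)
    show "g$1$1 mod 4 = 1" "g$2$2 mod 4 = 1" using rg by (auto simp: res_def)
    have "g$1$2 mod 4 = 0" "g$2$1 mod 4 = 0" using rg by (auto simp: res_def)
    then show "even (g$1$2)" "even (g$2$1)" by presburger+
  qed
  then obtain ws where ws: "evl ws = g" using mk2_eta[of g] by metis
  show ?thesis
  proof (cases "ws = []")
    case False then show ?thesis using ws by (auto simp: g_def x_def)
  next
    case True
    define ws0 where "ws0 = [(False,False),(False,True)]"
    have e0: "evl ws0 = mat 1"
      using gm_inv[of "(False,False)"] by (simp add: ginv_def ws0_def)
    have n0: "ws0 \<noteq> []" by (simp add: ws0_def)
    have g1: "c ** m ** adj (rep (c ** m)) = mat 1" using ws True by (simp add: g_def x_def)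
    show ?thesis using e0 n0 g1 by metis
  qed
qed

(* ---- part U ---- *)
type_synonym tr = "nat \<times> nat option \<times> nat \<times> (int^2^2)"

datatype ulab = Bnd nat "int^2^2" | Gh tr "int^2^2" nat

type_synonym ust = "ulab \<times> nat option \<times> ulab \<times> gen"

definition optl :: "nat option \<Rightarrow> nat list" where
  "optl s = (case s of None \<Rightarrow> [] | Some a \<Rightarrow> [a])"

definition src :: "tr \<Rightarrow> nat" where "src t = fst t"
definition inp :: "tr \<Rightarrow> nat option" where "inp t = fst (snd t)"
definition tgt :: "tr \<Rightarrow> nat" where "tgt t = fst (snd (snd t))"
definition mt :: "tr \<Rightarrow> int^2^2" where "mt t = snd (snd (snd t))"

definition cn :: "tr \<Rightarrow> int^2^2 \<Rightarrow> int^2^2" where "cn t c = rep (c ** mt t)"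

definition ws :: "tr \<Rightarrow> int^2^2 \<Rightarrow> gen list" where
  "ws t c = (SOME ws. ws \<noteq> [] \<and> evl ws = c ** mt t ** adj (cn t c))"

lemma ws_props: "det c = 1 \<Longrightarrow> det (mt t) = 1 \<Longrightarrow> ws t c \<noteq> [] \<and> evl (ws t c) = c ** mt t ** adj (cn t c)"
  unfolding ws_def cn_def by (rule someI_ex) (rule jump)

definition ul :: "tr \<Rightarrow> int^2^2 \<Rightarrow> nat \<Rightarrow> ulab" where
  "ul t c k = (if k = 0 then Bnd (src t) c else if k = length (ws t c) then Bnd (tgt t) (cn t c) else Gh t c k)"

definition ustep :: "tr \<Rightarrow> int^2^2 \<Rightarrow> nat \<Rightarrow> ust" where
  "ustep t c k = (ul t c k, (if k = 0 then inp t else None), ul t c (Suc k), ws t c ! k)"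

definition Cs :: "(int^2^2) set" where "Cs = {c \<in> range rep. det c = 1}"

definition U :: "tr set \<Rightarrow> ust set" where
  "U \<delta> = {ustep t c k | t c k. t \<in> \<delta> \<and> c \<in> Cs \<and> k < length (ws t c)}"

fun uchain :: "ulab \<Rightarrow> ust list \<Rightarrow> ulab \<Rightarrow> bool" where
  "uchain a [] b = (a = b)"
| "uchain a (x # xs) b = (fst x = a \<and> uchain (fst (snd (snd x))) xs b)"

definition uw :: "ust list \<Rightarrow> nat list" where "uw xs = concat (map (\<lambda>x. optl (fst (snd x))) xs)"
definition ug :: "ust list \<Rightarrow> gen list" where "ug xs = map (\<lambda>x. snd (snd (snd x))) xs"

lemma uw_append[simp]: "uw (xs @ ys) = uw xs @ uw ys" by (simp add: uw_def)
lemma ug_append[simp]: "ug (xs @ ys) = ug xs @ ug ys" by (simp add: ug_def)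
lemma uw_Nil[simp]: "uw [] = []" by (simp add: uw_def)
lemma ug_Nil[simp]: "ug [] = []" by (simp add: ug_def)
lemma uw_single[simp]: "uw [x] = optl (fst (snd x))" by (simp add: uw_def)
lemma optl_None[simp]: "optl None = []" by (simp add: optl_def)
lemma ug_single[simp]: "ug [x] = [snd (snd (snd x))]" by (simp add: ug_def)

lemma uchain_append: "uchain a (xs @ ys) b \<longleftrightarrow> (\<exists>m. uchain a xs m \<and> uchain m ys b)"
  by (induction xs arbitrary: a) auto

lemma uchain_snoc: "uchain a (xs @ [x]) b \<longleftrightarrow> uchain a xs (fst x) \<and> fst (snd (snd x)) = b"
  by (auto simp: uchain_append)

lemma Cs_one[simp]: "mat 1 \<in> Cs"
proof -
  have "mat 1 = rep (mat 1)" by simp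
  then show ?thesis unfolding Cs_def by (auto simp: mk2_one)
qed

lemma cn_Cs: "det c = 1 \<Longrightarrow> det (mt t) = 1 \<Longrightarrow> cn t c \<in> Cs"
  unfolding Cs_def cn_def using rep_props[of "c ** mt t"] by (auto simp: det_mul)

lemma Cs_det: "c \<in> Cs \<Longrightarrow> det c = 1" by (simp add: Cs_def)

lemma reach_step:
  assumes "reach (**) (mat 1) \<delta> q0 q w x" "(q, s, q', m) \<in> \<delta>"
  shows "reach (**) (mat 1) \<delta> q0 q' (w @ optl s) (x ** m)"
proof (cases s)
  case None then show ?thesis using assms reach.eps by (fastforce simp: optl_def)
next
  case (Some a) then show ?thesis using assms reach.read by (fastforce simp: optl_def)
qed

lemma tr_eq: "t = (src t, inp t, tgt t, mt t)" by (simp add: src_def inp_def tgt_def mt_def)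

definition uinv :: "tr set \<Rightarrow> nat \<Rightarrow> ulab \<Rightarrow> ust list \<Rightarrow> bool" where
  "uinv \<delta> q0 l xs = (case l of
      Bnd q c \<Rightarrow> reach (**) (mat 1) \<delta> q0 q (uw xs) (evl (ug xs) ** c)
    | Gh t c k \<Rightarrow> (\<exists>w' P'. reach (**) (mat 1) \<delta> q0 (src t) w' (P' ** c) \<and> uw xs = w' @ optl (inp t)
         \<and> evl (ug xs) = P' ** evl (take k (ws t c))))"

lemma sound:
  assumes dets: "\<And>t. t \<in> \<delta> \<Longrightarrow> det (mt t) = 1"
  shows "uchain (Bnd q0 (mat 1)) xs l \<Longrightarrow> set xs \<subseteq> U \<delta> \<Longrightarrow> uinv \<delta> q0 l xs"
proof (induction xs arbitrary: l rule: rev_induct)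
  case Nil
  then have "l = Bnd q0 (mat 1)" by simp
  then show ?case by (simp add: uinv_def reach.start)
next
  case (snoc x xs)
  from snoc.prems(2) obtain t c k where x: "x = ustep t c k" and t: "t \<in> \<delta>" and c: "c \<in> Cs"
    and k: "k < length (ws t c)" unfolding U_def by auto
  have dc: "det c = 1" using c Cs_det by simp
  have dm: "det (mt t) = 1" using dets t by simp
  have wsp: "ws t c \<noteq> []" "evl (ws t c) = c ** mt t ** adj (cn t c)" using ws_props[OF dc dm] by auto
  have dcn: "det (cn t c) = 1" using cn_Cs[OF dc dm] Cs_det by simp
  define n where "n = length (ws t c)"
  have ch: "uchain (Bnd q0 (mat 1)) xs (ul t c k)" and l: "l = ul t c (Suc k)"
    using snoc.prems(1) unfolding x uchain_snoc ustep_def by auto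
  have IH: "uinv \<delta> q0 (ul t c k) xs" using snoc.IH[OF ch] snoc.prems(2) by simp
  have ugx: "ug (xs @ [x]) = ug xs @ [ws t c ! k]" by (simp add: x ustep_def)
  have uwx: "uw (xs @ [x]) = uw xs @ optl (if k = 0 then inp t else None)" by (simp add: x ustep_def)
  have evx: "evl (ug (xs @ [x])) = evl (ug xs) ** gm (ws t c ! k)" unfolding ugx evl_append by simp
  have tk: "take (Suc k) (ws t c) = take k (ws t c) @ [ws t c ! k]" using k by (simp add: take_Suc_conv_app_nth)
  have tstep: "(src t, inp t, tgt t, mt t) \<in> \<delta>" using t tr_eq by simp
  have fin: "P ** c ** mt t = P ** evl (ws t c) ** cn t c" for P
  proof -
    have "P ** evl (ws t c) ** cn t c = P ** (c ** mt t) ** (adj (cn t c) ** cn t c)"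
      unfolding wsp(2) by (simp add: matrix_mul_assoc)
    also have "\<dots> = P ** c ** mt t" using adj_left[OF dcn] by (simp add: matrix_mul_assoc)
    finally show ?thesis by simp
  qed
  show ?case
  proof (cases "k = 0")
    case True
    have IH0: "reach (**) (mat 1) \<delta> q0 (src t) (uw xs) (evl (ug xs) ** c)"
      using IH True by (simp add: uinv_def ul_def)
    show ?thesis
    proof (cases "Suc k = n")
      case True2: True
      have "ws t c = [ws t c ! 0]" using True True2 wsp(1) unfolding n_def
        by (metis One_nat_def Suc_length_conv length_0_conv nth_Cons_0)
      then have e1: "gm (ws t c ! k) = evl (ws t c)" using True by (metis evl.simps matrix_mul_rid)
      have "reach (**) (mat 1) \<delta> q0 (tgt t) (uw xs @ optl (inp t)) (evl (ug xs) ** c ** mt t)"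
        using reach_step[OF IH0 tstep] .
      then have "reach (**) (mat 1) \<delta> q0 (tgt t) (uw xs @ optl (inp t)) (evl (ug xs) ** evl (ws t c) ** cn t c)"
        using fin[of "evl (ug xs)"] by simp
      then show ?thesis unfolding uinv_def l ul_def using True True2 uwx evx e1 n_def wsp(1) by simp
    next
      case False2: False
      have "l = Gh t c 1" using l True False2 unfolding ul_def n_def by simp
      moreover have "evl (take 1 (ws t c)) = gm (ws t c ! 0)" using wsp(1)
        by (cases "ws t c") auto
      ultimately show ?thesis unfolding uinv_def using IH0 True uwx evx by auto
    qed
  next
    case False
    have lo: "ul t c k = Gh t c k" using False k unfolding ul_def by simp
    obtain w' P' where w': "reach (**) (mat 1) \<delta> q0 (src t) w' (P' ** c)" "uw xs = w' @ optl (inp t)"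
      "evl (ug xs) = P' ** evl (take k (ws t c))" using IH unfolding lo uinv_def by auto
    have evx2: "evl (ug (xs @ [x])) = P' ** evl (take (Suc k) (ws t c))"
      unfolding evx w'(3) tk evl_append by (simp add: matrix_mul_assoc)
    show ?thesis
    proof (cases "Suc k = n")
      case True2: True
      have "take (Suc k) (ws t c) = ws t c" using True2 n_def by simp
      then have e: "evl (ug (xs @ [x])) = P' ** evl (ws t c)" using evx2 by simp
      have "reach (**) (mat 1) \<delta> q0 (tgt t) (w' @ optl (inp t)) (P' ** c ** mt t)"
        using reach_step[OF w'(1) tstep] .
      then have "reach (**) (mat 1) \<delta> q0 (tgt t) (w' @ optl (inp t)) (P' ** evl (ws t c) ** cn t c)"
        using fin[of P'] by simp
      then show ?thesis unfolding uinv_def l ul_def using True2 False uwx e w'(2) n_def wsp(1) by simp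
    next
      case False2: False
      have "l = Gh t c (Suc k)" using l False2 unfolding ul_def n_def by simp
      then show ?thesis unfolding uinv_def using w' False uwx evx2 by auto
    qed
  qed
qed

(* ---- part U2 ---- *)
lemma uchain_run: "uchain (f 0) (map (\<lambda>k. (f k, h k, f (Suc k), g k)) [0..<n]) (f n)"
  by (induction n) (auto simp: uchain_append)

lemma uw_rest: "uw (map (ustep t c) [Suc 0..<n]) = []"
  by (induction n) (auto simp: uw_def ustep_def)

lemma ext_step:
  assumes dets: "\<And>t. t \<in> \<delta> \<Longrightarrow> det (mt t) = 1"
    and tr: "(q, s, q', m) \<in> \<delta>"
    and xs: "uchain (Bnd q0 (mat 1)) xs (Bnd q c)" "set xs \<subseteq> U \<delta>" "uw xs = w" "x = evl (ug xs) ** c"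
      "c = rep x" "det x = 1"
  shows "\<exists>xs c. uchain (Bnd q0 (mat 1)) xs (Bnd q' c) \<and> set xs \<subseteq> U \<delta> \<and> uw xs = w @ optl s
     \<and> x ** m = evl (ug xs) ** c \<and> c = rep (x ** m) \<and> det (x ** m) = 1"
proof -
  define t where "t = (q, s, q', m)"
  have tt: "src t = q" "inp t = s" "tgt t = q'" "mt t = m" by (simp_all add: t_def src_def inp_def tgt_def mt_def)
  have dm: "det m = 1" using dets[of t] tr tt t_def by simp
  have rp: "det (rep x) = 1" "res (rep x) = res x" using rep_props[OF xs(6)] by auto
  have dc: "det c = 1" using rp xs(5) by simp
  have cC: "c \<in> Cs" unfolding Cs_def using xs(5) dc by auto
  have wsp: "ws t c \<noteq> []" "evl (ws t c) = c ** m ** adj (cn t c)" using ws_props[of c t] dc dm tt by auto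
  have dcn: "det (cn t c) = 1" using cn_Cs[of c t] dc dm tt Cs_det by auto
  define n where "n = length (ws t c)"
  have n0: "n \<noteq> 0" using wsp n_def by simp
  define ys where "ys = map (ustep t c) [0..<n]"
  have ch: "uchain (ul t c 0) ys (ul t c n)"
    unfolding ys_def ustep_def by (rule uchain_run)
  have u0: "ul t c 0 = Bnd q c" and un: "ul t c n = Bnd q' (cn t c)"
    using n0 tt unfolding ul_def n_def by auto
  have sub: "set ys \<subseteq> U \<delta>"
  proof
    fix y assume "y \<in> set ys"
    then obtain k where "k < n" "y = ustep t c k" unfolding ys_def by auto
    then show "y \<in> U \<delta>" unfolding U_def using tr cC n_def t_def by blast
  qed
  have uwy: "uw ys = optl s"
  proof -
    have "[0..<n] = 0 # [Suc 0..<n]" using n0 by (simp add: upt_rec)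
    then have "ys = ustep t c 0 # map (ustep t c) [Suc 0..<n]" unfolding ys_def by simp
    then show ?thesis using uw_rest[of t c n] tt by (simp add: uw_def ustep_def)
  qed
  have ugy: "ug ys = ws t c"
  proof -
    have "ug ys = map (\<lambda>k. ws t c ! k) [0..<n]" unfolding ys_def ug_def ustep_def by simp
    then show ?thesis unfolding n_def by (simp add: map_nth)
  qed
  have mat: "x ** m = evl (ug (xs @ ys)) ** cn t c"
  proof -
    have "evl (ug (xs @ ys)) ** cn t c = evl (ug xs) ** (c ** m) ** (adj (cn t c) ** cn t c)"
      unfolding ug_append evl_append ugy wsp(2) by (simp add: matrix_mul_assoc)
    also have "\<dots> = x ** m" using adj_left[OF dcn] xs(4) by (simp add: matrix_mul_assoc)
    finally show ?thesis by simp
  qed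
  have rc: "res c = res x" using rp xs(5) by simp
  have cn: "cn t c = rep (x ** m)"
    unfolding cn_def tt(4) by (rule rep_cong, rule res_mult) (rule rc, rule refl)
  have c1: "uchain (Bnd q0 (mat 1)) (xs @ ys) (Bnd q' (cn t c))"
    unfolding uchain_append using xs(1) ch u0 un by auto
  have c2: "set (xs @ ys) \<subseteq> U \<delta>" using xs(2) sub by simp
  have c3: "uw (xs @ ys) = w @ optl s" using xs(3) uwy by simp
  have c4: "det (x ** m) = 1" using xs(6) dm by (simp add: det_mul)
  show ?thesis using c1 c2 c3 c4 mat cn by blast
qed

lemma complete:
  assumes dets: "\<And>t. t \<in> \<delta> \<Longrightarrow> det (mt t) = 1"
  shows "reach (**) (mat 1) \<delta> q0 q w x \<Longrightarrow> \<exists>xs c. uchain (Bnd q0 (mat 1)) xs (Bnd q c) \<and> set xs \<subseteq> U \<delta> \<and>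
     uw xs = w \<and> x = evl (ug xs) ** c \<and> c = rep x \<and> det x = 1"
proof (induction rule: reach.induct)
  case start
  show ?case by (rule exI[of _ "[]"], rule exI[of _ "mat 1"]) simp
next
  case (read q w x a q' m)
  then obtain xs c where "uchain (Bnd q0 (mat 1)) xs (Bnd q c)" "set xs \<subseteq> U \<delta>" "uw xs = w"
    "x = evl (ug xs) ** c" "c = rep x" "det x = 1" by blast
  from ext_step[OF dets read.hyps(2) this] show ?case by (simp add: optl_def)
next
  case (eps q w x q' m)
  then obtain xs c where "uchain (Bnd q0 (mat 1)) xs (Bnd q c)" "set xs \<subseteq> U \<delta>" "uw xs = w"
    "x = evl (ug xs) ** c" "c = rep x" "det x = 1" by blast
  from ext_step[OF dets eps.hyps(2) this] show ?case by simp
qed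

(* ---- part Comb ---- *)
fun W :: "nat \<Rightarrow> nat \<Rightarrow> nat" where
  "W K 0 = 0"
| "W K (Suc h) = K * (2 + W K h)"

lemma W_mono: "h \<le> h' \<Longrightarrow> W K h \<le> W K h'"
proof (induction h' arbitrary: h)
  case 0 then show ?case by simp
next
  case (Suc h')
  show ?case
  proof (cases "h = Suc h'")
    case True then show ?thesis by simp
  next
    case False
    then have "h \<le> h'" using Suc.prems by simp
    then have "W K h \<le> W K h'" using Suc.IH by simp
    also have "W K h' \<le> W K (Suc h')"
    proof (cases "K = 0")
      case True then show ?thesis by (cases h') auto
    next
      case False
      then have "W K h' \<le> K * W K h'" by (cases K) auto
      also have "\<dots> \<le> K * (2 + W K h')" by simp
      finally show ?thesis by simp
    qed
    finally show ?thesis .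
  qed
qed

locale walk =
  fixes N :: nat and lab :: "nat \<Rightarrow> 'l" and stk :: "nat \<Rightarrow> 'g list" and rd :: "nat \<Rightarrow> nat"
    and Lam :: "'l set"
  assumes finL: "finite Lam"
    and labs: "\<And>p. p \<le> N \<Longrightarrow> lab p \<in> Lam"
    and stp: "\<And>p. p < N \<Longrightarrow> (\<exists>z. stk (Suc p) = stk p @ [z]) \<or> (\<exists>z. stk p = stk (Suc p) @ [z])"
    and rd1: "\<And>p. p < N \<Longrightarrow> rd p \<le> 1"
    and NP: "\<And>i j k l. i \<le> j \<Longrightarrow> j \<le> k \<Longrightarrow> k \<le> l \<Longrightarrow> l \<le> N \<Longrightarrow> lab i = lab j \<Longrightarrow>
        lab k = lab l \<Longrightarrow> stk i = stk l \<Longrightarrow> stk j = stk k \<Longrightarrow>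
        sum rd {i..<j} + sum rd {k..<l} = 0"
begin

definition R :: "nat \<Rightarrow> nat \<Rightarrow> nat" where "R a b = sum rd {a..<b}"

lemma R_split: "a \<le> b \<Longrightarrow> b \<le> c \<Longrightarrow> R a c = R a b + R b c"
  unfolding R_def by (metis sum.atLeastLessThan_concat)

lemma R_mono: "a \<le> a' \<Longrightarrow> a' \<le> b' \<Longrightarrow> b' \<le> b \<Longrightarrow> R a' b' \<le> R a b"
  using R_split by (metis le_add1 le_add2 order_trans)

definition good :: "nat \<Rightarrow> nat \<Rightarrow> bool" where
  "good s e \<longleftrightarrow> s \<le> e \<and> e \<le> N \<and> stk s = stk e \<and> (\<forall>p. s \<le> p \<and> p \<le> e \<longrightarrow> prefix (stk s) (stk p))"

definition pl :: "nat \<Rightarrow> nat \<Rightarrow> ('l \<times> 'l) set" where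
  "pl s e = {(lab i, lab l) | i l. s \<le> i \<and> i \<le> l \<and> l \<le> e \<and> good i l}"

lemma pl_sub: "e \<le> N \<Longrightarrow> pl s e \<subseteq> Lam \<times> Lam"
  unfolding pl_def good_def using labs by auto

lemma len_step: "p < N \<Longrightarrow> stk (Suc p) \<noteq> stk p"
  using stp[of p] by auto

lemma exc:
  assumes re: "r < e" "e \<le> N" "stk r = stk e" and noret: "\<And>t. r < t \<Longrightarrow> t < e \<Longrightarrow> stk t \<noteq> stk r"
    and pre: "\<And>t. r \<le> t \<Longrightarrow> t \<le> e \<Longrightarrow> prefix (stk r) (stk t)"
  shows "Suc r < e \<and> good (Suc r) (e - 1) \<and> R r e \<le> 2 + R (Suc r) (e - 1)"
proof -
  define st where "st = stk r"
  have ne: "Suc r \<noteq> e" using len_step[of r] re by auto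
  then have sre: "Suc r < e" using re by simp
  have longer: "length (stk t) > length st" if "r < t" "t < e" for t
  proof -
    have "prefix st (stk t)" using pre that unfolding st_def by simp
    moreover have "stk t \<noteq> st" using noret that unfolding st_def by simp
    ultimately show ?thesis by (metis prefix_length_less prefix_order.dual_order.not_eq_order_implies_strict)
  qed
  obtain z where z: "stk (Suc r) = st @ [z]"
  proof -
    have "Suc r < e" by fact
    from stp[of r] re consider (a) y where "stk (Suc r) = stk r @ [y]" | (b) y where "stk r = stk (Suc r) @ [y]" by auto
    then show ?thesis
    proof cases
      case a then show ?thesis using that st_def by simp
    next
      case b
      have "length (stk (Suc r)) > length st" using longer[of "Suc r"] sre by simp
      with b show ?thesis unfolding st_def by simp
    qed
  qed
  have pz: "prefix (st @ [z]) (stk t)" if "Suc r \<le> t" "t \<le> e - 1" for t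
    using that
  proof (induction t rule: dec_induct)
    case base then show ?case using z by simp
  next
    case (step t)
    have tN: "t < N" using step re by simp
    have lt: "length (stk (Suc t)) > length st" using longer[of "Suc t"] step sre by simp
    have ps: "prefix st (stk (Suc t))" using pre[of "Suc t"] step unfolding st_def by simp
    from stp[OF tN] consider (a) y where "stk (Suc t) = stk t @ [y]" | (b) y where "stk t = stk (Suc t) @ [y]" by auto
    then show ?case
    proof cases
      case a then show ?thesis using step by (simp add: prefix_order.trans)
    next
      case b
      then have "prefix (stk (Suc t)) (stk t)" by simp
      moreover have "prefix (st @ [z]) (stk t)" using step by simp
      moreover have "length (st @ [z]) \<le> length (stk (Suc t))" using lt by simp
      ultimately show ?thesis by (metis prefix_length_prefix)
    qed
  qed
  have e1: "stk (e - 1) = st @ [z]"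
  proof -
    have pe: "prefix (st @ [z]) (stk (e - 1))" using pz[of "e - 1"] sre by simp
    have eN: "e - 1 < N" using re by simp
    have se: "Suc (e - 1) = e" using re by simp
    from stp[OF eN] consider (a) y where "stk e = stk (e - 1) @ [y]" | (b) y where "stk (e - 1) = stk e @ [y]"
      using se by auto
    then show ?thesis
    proof cases
      case a
      then have "length (stk e) > length st" using pe by (auto dest: prefix_length_le)
      then show ?thesis using re st_def by simp
    next
      case b
      then have "stk (e - 1) = st @ [y]" using re st_def by simp
      with pe show ?thesis by auto
    qed
  qed
  have g: "good (Suc r) (e - 1)"
    unfolding good_def using sre re e1 z pz by auto
  have "R r e = rd r + R (Suc r) (e - 1) + rd (e - 1)"
  proof -
    have "R r e = R r (Suc r) + R (Suc r) (e - 1) + R (e - 1) e"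
      using R_split sre by (metis Suc_leI Suc_le_eq diff_le_self less_imp_Suc_add add_Suc_right diff_Suc_1 le_add1 R_split)
    moreover have "R r (Suc r) = rd r" unfolding R_def by simp
    moreover have "R (e - 1) e = rd (e - 1)"
    proof -
      have "{e - 1..<e} = {e - 1}" using sre by auto
      then show ?thesis unfolding R_def by simp
    qed
    ultimately show ?thesis by simp
  qed
  moreover have "rd r \<le> 1" "rd (e - 1) \<le> 1" using rd1 re by auto
  ultimately show ?thesis using sre g by simp
qed

lemma ret:
  assumes g: "good j k"
    and X: "\<And>r e'. j \<le> r \<Longrightarrow> r < e' \<Longrightarrow> e' \<le> k \<Longrightarrow> stk r = stk j \<Longrightarrow> stk e' = stk j \<Longrightarrow>
       (\<And>t. r < t \<Longrightarrow> t < e' \<Longrightarrow> stk t \<noteq> stk j) \<Longrightarrow> R r e' \<le> X"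
  shows "R j k \<le> card Lam * X"
proof -
  define T where "T e = {t. j \<le> t \<and> t \<le> e \<and> stk t = stk j}" for e
  have kN: "k \<le> N" and jk: "j \<le> k" using g unfolding good_def by auto
  have finT: "finite (T e)" for e unfolding T_def by (rule finite_subset[of _ "{..e}"]) auto
  have C: "j \<le> e \<longrightarrow> e \<le> k \<longrightarrow> stk e = stk j \<longrightarrow> R j e + X \<le> card (lab ` T e) * X" for e
  proof (induction e rule: less_induct)
    case (less e)
    show ?case
    proof (intro impI)
      assume je: "j \<le> e" and ek: "e \<le> k" and se: "stk e = stk j"
      show "R j e + X \<le> card (lab ` T e) * X"
      proof (cases "e = j")
        case True
        then have "T e = {j}" unfolding T_def by auto
        then show ?thesis using True unfolding R_def by simp
      next
        case False
        define T' where "T' = {t. j \<le> t \<and> t < e \<and> stk t = stk j}"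
        have fT': "finite T'" unfolding T'_def by (rule finite_subset[of _ "{..<e}"]) auto
        have jT': "j \<in> T'" unfolding T'_def using je False by auto
        define r where "r = Max T'"
        have rT: "r \<in> T'" unfolding r_def using fT' jT' by (intro Max_in) auto
        have rmax: "t \<le> r" if "t \<in> T'" for t unfolding r_def using fT' that by simp
        have jr: "j \<le> r" and re: "r < e" and sr: "stk r = stk j" using rT unfolding T'_def by auto
        have noret: "stk t \<noteq> stk j" if "r < t" "t < e" for t
          using rmax[of t] that je jr unfolding T'_def by auto
        have IH: "R j r + X \<le> card (lab ` T r) * X" using less.IH[of r] jr re ek sr by simp
        have Xre: "R r e \<le> X" using X[of r e] jr re ek sr se noret by simp
        have split: "R j e = R j r + R r e" using R_split[OF jr less_imp_le[OF re]] .
        have sub: "T r \<subseteq> T e" unfolding T_def using re by auto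
        have cmono: "card (lab ` T r) \<le> card (lab ` T e)"
          using sub finT by (simp add: card_mono image_mono)
        show ?thesis
        proof (cases "R r e = 0")
          case True
          then show ?thesis using IH split cmono by (metis add_0_right le_trans mult_le_mono1)
        next
          case False
          have notin: "lab e \<notin> lab ` T r"
          proof
            assume "lab e \<in> lab ` T r"
            then obtain t where tT: "t \<in> T r" and lt: "lab t = lab e" by auto
            have te: "t \<le> r" "j \<le> t" "stk t = stk j" using tT unfolding T_def by auto
            have "sum rd {t..<e} + sum rd {e..<e} = 0"
              using NP[of t e e e] te re kN ek lt se by simp
            then have "R t e = 0" unfolding R_def by simp
            moreover have "R r e \<le> R t e" using R_mono te re by simp
            ultimately show False using False by simp
          qed
          have "insert (lab e) (lab ` T r) \<subseteq> lab ` T e" using sub je se unfolding T_def by auto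
          then have "card (insert (lab e) (lab ` T r)) \<le> card (lab ` T e)"
            using finT by (simp add: card_mono)
          then have "card (lab ` T r) + 1 \<le> card (lab ` T e)" using notin finT by simp
          then have "(card (lab ` T r) + 1) * X \<le> card (lab ` T e) * X" by (rule mult_le_mono1)
          then show ?thesis using IH split Xre by (simp add: algebra_simps)
        qed
      qed
    qed
  qed
  have "R j k + X \<le> card (lab ` T k) * X" using C[of k] jk g unfolding good_def by simp
  moreover have "card (lab ` T k) \<le> card Lam"
    using labs kN finL by (intro card_mono) (auto simp: T_def)
  ultimately show ?thesis by (meson le_add1 le_trans mult_le_mono1)
qed

lemma core: "good s e \<Longrightarrow> card (pl s e) \<le> h \<Longrightarrow> R s e \<le> W (card Lam) h"
proof (induction h arbitrary: s e)
  case 0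
  have "s \<le> e" using 0(1) unfolding good_def by simp
  then have "(lab s, lab e) \<in> pl s e" using 0(1) unfolding pl_def by blast
  moreover have "finite (pl s e)" using pl_sub[of e s] finL 0 unfolding good_def
    by (meson finite_SigmaI finite_subset)
  ultimately show ?case using 0 by (simp add: card_gt_0_iff)
next
  case (Suc h)
  define \<pi> where "\<pi> = (lab s, lab e)"
  have eN: "e \<le> N" using Suc.prems unfolding good_def by simp
  have finpl: "finite (pl s e)" using pl_sub[OF eN] finL by (meson finite_SigmaI finite_subset)
  define P where "P d \<longleftrightarrow> (\<exists>j k. s \<le> j \<and> j \<le> k \<and> k \<le> e \<and> good j k \<and> (lab j, lab k) = \<pi> \<and> k - j = d)" for d
  have "P (e - s)" unfolding P_def \<pi>_def using Suc.prems unfolding good_def by blast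
  then have "P (LEAST d. P d)" by (rule LeastI)
  then obtain j k where jk: "s \<le> j" "j \<le> k" "k \<le> e" "good j k" "(lab j, lab k) = \<pi>"
      and dk: "k - j = (LEAST d. P d)" unfolding P_def by blast
  have minl: "k - j \<le> b - a" if "s \<le> a" "a \<le> b" "b \<le> e" "good a b" "(lab a, lab b) = \<pi>" for a b
  proof -
    have "P (b - a)" unfolding P_def using that by blast
    then show ?thesis unfolding dk by (rule Least_le)
  qed
  have gse: "stk s = stk e" using Suc.prems unfolding good_def by simp
  have gjk: "stk j = stk k" using jk unfolding good_def by simp
  have "sum rd {s..<j} + sum rd {k..<e} = 0"
    using NP[of s j k e] jk eN gse gjk unfolding \<pi>_def by simp
  then have "R s j = 0" "R k e = 0" unfolding R_def by auto
  then have Rse: "R s e = R j k" using R_split jk by (metis add.commute add_0 le_trans)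
  have "R j k \<le> card Lam * (2 + W (card Lam) h)"
  proof (rule ret[OF jk(4)])
    fix r e'
    assume a: "j \<le> r" "r < e'" "e' \<le> k" "stk r = stk j" "stk e' = stk j"
      and nr: "\<And>t. r < t \<Longrightarrow> t < e' \<Longrightarrow> stk t \<noteq> stk j"
    have pre: "prefix (stk r) (stk t)" if "r \<le> t" "t \<le> e'" for t
      using jk(4) a that unfolding good_def by auto
    have ex: "Suc r < e' \<and> good (Suc r) (e' - 1) \<and> R r e' \<le> 2 + R (Suc r) (e' - 1)"
      using exc[of r e'] a nr pre jk eN by auto
    have subs: "pl (Suc r) (e' - 1) \<subseteq> pl s e - {\<pi>}"
    proof
      fix x assume "x \<in> pl (Suc r) (e' - 1)"
      then obtain a' b' where x: "x = (lab a', lab b')" "Suc r \<le> a'" "a' \<le> b'" "b' \<le> e' - 1" "good a' b'"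
        unfolding pl_def by blast
      have "x \<in> pl s e" unfolding pl_def using x a jk by (intro CollectI exI[of _ a'] exI[of _ b']) auto
      moreover have "x \<noteq> \<pi>"
      proof
        assume "x = \<pi>"
        then have "k - j \<le> b' - a'" using minl[of a' b'] x a jk by simp
        moreover have "b' - a' < k - j" using x a ex by simp
        ultimately show False by simp
      qed
      ultimately show "x \<in> pl s e - {\<pi>}" by simp
    qed
    have "s \<le> e" using Suc.prems unfolding good_def by simp
    then have "\<pi> \<in> pl s e" unfolding pl_def \<pi>_def using Suc.prems(1) by blast
    then have "card (pl (Suc r) (e' - 1)) \<le> card (pl s e) - 1"
      using subs finpl by (metis card_Diff_singleton card_mono finite_Diff)
    then have "card (pl (Suc r) (e' - 1)) \<le> h" using Suc.prems by simp
    then have "R (Suc r) (e' - 1) \<le> W (card Lam) h" using Suc.IH ex by simp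
    then show "R r e' \<le> 2 + W (card Lam) h" using ex by simp
  qed
  then show ?case using Rse by simp
qed

theorem bound:
  assumes "stk 0 = []" "stk N = []"
  shows "sum rd {0..<N} \<le> W (card Lam) (card Lam * card Lam)"
proof -
  have g: "good 0 N" unfolding good_def using assms by simp
  have "card (pl 0 N) \<le> card (Lam \<times> Lam)"
    by (rule card_mono) (simp_all add: finL pl_sub)
  then have "card (pl 0 N) \<le> card Lam * card Lam" by (simp add: card_cartesian_product)
  from core[OF g this] show ?thesis unfolding R_def .
qed

end

(* ---- part Fin1 ---- *)
definition Labc :: "nat list set" where
  "Labc = {replicate n 0 @ replicate n 1 @ replicate n 2 | n. True}"

lemma count_rep: "count_list (replicate n a) b = (if a = b then n else 0)"
  by (induction n) auto

lemma len_count: "set xs \<subseteq> {0,1,2::nat} \<Longrightarrow> length xs = count_list xs 0 + count_list xs 1 + count_list xs 2"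
  by (induction xs) auto

lemma Labc_props: "w \<in> Labc \<Longrightarrow> sorted w \<and> set w \<subseteq> {0,1,2} \<and> count_list w 0 = count_list w 1 \<and> count_list w 1 = count_list w 2"
  unfolding Labc_def by (auto simp: count_rep sorted_append)

lemma sorted_vv: "sorted (v @ v) \<Longrightarrow> a \<in> set v \<Longrightarrow> b \<in> set v \<Longrightarrow> a = (b::nat)"
  by (metis antisym sorted_append)

lemma pump_contra:
  assumes w1: "u @ v @ x @ y @ z \<in> Labc" and w2: "u @ v @ v @ x @ y @ y @ z \<in> Labc"
    and pos: "length v + length y > 0"
  shows False
proof -
  note p1 = Labc_props[OF w1] and p2 = Labc_props[OF w2]
  have cnt: "count_list (u @ v @ v @ x @ y @ y @ z) a = count_list (u @ v @ x @ y @ z) a + count_list (v @ y) a" for a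
    by simp
  have eq: "count_list (v @ y) 0 = count_list (v @ y) 1" "count_list (v @ y) 1 = count_list (v @ y) 2"
    using p1 p2 cnt[of 0] cnt[of 1] cnt[of 2] by linarith+
  have sub: "set (v @ y) \<subseteq> {0,1,2}" using p2 by auto
  have "length (v @ y) = count_list (v @ y) 0 + count_list (v @ y) 1 + count_list (v @ y) 2"
    using len_count[OF sub] .
  then have c0: "count_list (v @ y) 0 > 0" "count_list (v @ y) 1 > 0" "count_list (v @ y) 2 > 0"
    using eq pos by auto
  have i0: "0 \<in> set (v @ y)" "1 \<in> set (v @ y)" "2 \<in> set (v @ y)"
    using c0 by (metis count_list_0_iff less_irrefl)+
  have sv: "sorted (v @ v)" using p2 by (simp add: sorted_append)
  have sy: "sorted (y @ y)" using p2 by (simp add: sorted_append)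
  have "card (set (v @ y)) \<le> 2"
  proof -
    have "card (set v) \<le> Suc 0" using sorted_vv[OF sv] by (subst card_le_Suc0_iff_eq) auto
    moreover have "card (set y) \<le> Suc 0" using sorted_vv[OF sy] by (subst card_le_Suc0_iff_eq) auto
    ultimately show ?thesis by (simp add: card_Un_le[THEN order_trans])
  qed
  moreover have "{0,1,2::nat} \<subseteq> set (v @ y)" using i0 by blast
  then have "card {0,1,2::nat} \<le> card (set (v @ y))" by (intro card_mono) auto
  ultimately show False by simp
qed

definition red :: "gen list \<Rightarrow> gen \<Rightarrow> gen list" where
  "red st g = (if st \<noteq> [] \<and> last st = ginv g then butlast st else st @ [g])"

lemma evl_red: "evl (red st g) = evl st ** gm g"
proof (cases "st \<noteq> [] \<and> last st = ginv g")
  case True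
  then have ne: "st \<noteq> []" and l: "last st = ginv g" by auto
  have "st = butlast st @ [last st]" using ne by simp
  then have st: "st = butlast st @ [ginv g]" using l by simp
  have "evl st ** gm g = evl (butlast st) ** (gm (ginv g) ** gm g)"
    by (subst st) (simp add: evl_append matrix_mul_assoc)
  also have "\<dots> = evl (butlast st)" using gm_inv[of "ginv g"] by simp
  finally show ?thesis using True by (simp add: red_def)
next
  case False then show ?thesis by (auto simp: red_def evl_append)
qed

lemma red_succ: "successively (\<lambda>g h. h \<noteq> ginv g) st \<Longrightarrow> successively (\<lambda>g h. h \<noteq> ginv g) (red st g)"
proof (cases "st \<noteq> [] \<and> last st = ginv g")
  case True
  assume s: "successively (\<lambda>g h. h \<noteq> ginv g) st"
  have "st = butlast st @ [last st]" using True by (metis append_butlast_last_id)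
  then have "successively (\<lambda>g h. h \<noteq> ginv g) (butlast st)" using s by (metis successively_append_iff)
  then show ?thesis using True by (simp add: red_def)
next
  case False
  assume s: "successively (\<lambda>g h. h \<noteq> ginv g) st"
  have "g \<noteq> ginv (last st)" if "st \<noteq> []" using False that by (metis ginv_ginv)
  then show ?thesis using False s by (auto simp: red_def successively_append_iff)
qed

lemma red_step: "(\<exists>z. red st g = st @ [z]) \<or> (\<exists>z. st = red st g @ [z])"
proof (cases "st \<noteq> [] \<and> last st = ginv g")
  case True
  then have ne: "st \<noteq> []" by simp
  have "red st g = butlast st" using True by (simp add: red_def)
  then have "st = red st g @ [last st]" using ne by simp
  then show ?thesis by blast
next
  case False
  then have "red st g = st @ [g]" by (auto simp: red_def)
  then show ?thesis by blast
qed

lemma evl_foldl: "evl (foldl red st gs) = evl st ** evl gs"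
  by (induction gs arbitrary: st) (auto simp: evl_red matrix_mul_assoc)

lemma succ_foldl: "successively (\<lambda>g h. h \<noteq> ginv g) st \<Longrightarrow> successively (\<lambda>g h. h \<noteq> ginv g) (foldl red st gs)"
  by (induction gs arbitrary: st) (auto simp: red_succ)

lemma sum_seg: "b \<le> length xs \<Longrightarrow> sum_list (map g (take (b - a) (drop a xs))) = (\<Sum>p\<in>{a..<b}. g (xs ! p))"
proof (induction b)
  case 0 then show ?case by simp
next
  case (Suc b)
  show ?case
  proof (cases "Suc b \<le> a")
    case True then show ?thesis by simp
  next
    case False
    then have ab: "a \<le> b" by simp
    have "take (Suc b - a) (drop a xs) = take (b - a) (drop a xs) @ [xs ! b]"
    proof -
      have "Suc b - a = Suc (b - a)" using ab by simp
      moreover have "b - a < length (drop a xs)" using Suc.prems ab by simp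
      ultimately show ?thesis using ab by (simp add: take_Suc_conv_app_nth)
    qed
    then show ?thesis using Suc ab by simp
  qed
qed

definition labf :: "ulab \<Rightarrow> ust list \<Rightarrow> nat \<Rightarrow> ulab" where
  "labf a xs p = (if p = 0 then a else fst (snd (snd (xs ! (p - 1)))))"

lemma uchain_take_drop: "uchain a xs b \<Longrightarrow> p \<le> length xs \<Longrightarrow>
  uchain a (take p xs) (labf a xs p) \<and> uchain (labf a xs p) (drop p xs) b"
proof (induction xs arbitrary: a p)
  case Nil then show ?case by (simp add: labf_def)
next
  case (Cons x xs)
  show ?case
  proof (cases p)
    case 0 then show ?thesis using Cons.prems by (simp add: labf_def)
  next
    case (Suc p')
    have "labf a (x # xs) p = labf (fst (snd (snd x))) xs p'" using Suc by (simp add: labf_def nth_Cons')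
    then show ?thesis using Cons.IH[of "fst (snd (snd x))" p'] Cons.prems Suc by simp
  qed
qed

lemma labf_drop: "a \<le> b \<Longrightarrow> b \<le> length xs \<Longrightarrow> labf (labf l xs a) (drop a xs) (b - a) = labf l xs b"
proof (cases "b = a")
  case True then show ?thesis by (simp add: labf_def)
next
  case False
  assume ab: "a \<le> b" "b \<le> length xs"
  then have "drop a xs ! (b - a - 1) = xs ! (b - 1)" using False by (simp add: nth_drop)
  then show ?thesis using False ab by (simp add: labf_def)
qed

lemma uchain_seg: "uchain l xs b0 \<Longrightarrow> a \<le> b \<Longrightarrow> b \<le> length xs \<Longrightarrow>
   uchain (labf l xs a) (take (b - a) (drop a xs)) (labf l xs b)"
proof -
  assume ch: "uchain l xs b0" and ab: "a \<le> b" and bl: "b \<le> length xs"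
  have "uchain (labf l xs a) (drop a xs) b0" using uchain_take_drop[OF ch] ab bl by simp
  from uchain_take_drop[OF this, of "b - a"] bl ab show ?thesis by (simp add: labf_drop)
qed

lemma pump_alg:
  fixes Xi Xj E1 E2 E3 E4 :: "int^2^2"
  assumes "det Xi = 1" "det Xj = 1" "Xi ** E1 = Xj" "Xj ** E2 = Xj" "Xj ** E3 = Xi" "Xi ** E4 = mat 1"
  shows "Xi ** E1 ** E1 ** E2 ** E3 ** E3 ** E4 = mat 1"
proof -
  have E2: "E2 = mat 1"
  proof -
    have "E2 = adj Xj ** Xj ** E2" using adj_left[OF assms(2)] by simp
    also have "\<dots> = adj Xj ** Xj" using assms(4) by (simp add: matrix_mul_assoc[symmetric])
    finally show ?thesis using adj_left[OF assms(2)] by simp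
  qed
  have E13: "E1 ** E3 = mat 1"
  proof -
    have "Xi ** (E1 ** E3) = Xi" using assms(3,5) by (simp add: matrix_mul_assoc)
    then have "adj Xi ** Xi ** (E1 ** E3) = adj Xi ** Xi" by (simp add: matrix_mul_assoc[symmetric])
    then show ?thesis using adj_left[OF assms(1)] by simp
  qed
  have aux: "E1 ** (E3 ** Y) = Y" for Y using E13 by (simp add: matrix_mul_assoc)
  show ?thesis by (simp add: E2 matrix_mul_assoc[symmetric] aux assms(6))
qed

(* ---- part Fin2 ---- *)
lemma take_split: "a \<le> b \<Longrightarrow> take b xs = take a xs @ take (b - a) (drop a xs)"
  by (metis le_add_diff_inverse take_add)

lemma len_uw: "length (uw S) = sum_list (map (\<lambda>x. length (optl (fst (snd x)))) S)"
  by (simp add: uw_def length_concat comp_def)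

theorem not_SL2: "Labc \<notin> lang_class (SL_carrier :: (int^2^2) set) (**) (mat 1)"
proof
  assume "Labc \<in> lang_class (SL_carrier :: (int^2^2) set) (**) (mat 1)"
  then obtain Q \<Sigma> \<delta> q0 Qa where GA: "G_automaton (SL_carrier :: (int^2^2) set) Q \<Sigma> \<delta> q0 Qa"
    and LL: "Labc = accepted_lang (**) (mat 1) \<delta> q0 Qa" unfolding lang_class_def by blast
  have GAf: "finite Q" "q0 \<in> Q" "Qa \<subseteq> Q"
    and GAd: "\<And>q s q' m. (q, s, q', m) \<in> \<delta> \<Longrightarrow> q \<in> Q \<and> q' \<in> Q \<and> det m = 1"
    using GA unfolding G_automaton_def SL_carrier_def by fastforce+
  have dets: "det (mt t) = 1" if "t \<in> \<delta>" for t
    using GAd[of "src t" "inp t" "tgt t" "mt t"] that tr_eq[of t] by simp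
  have srcQ: "src t \<in> Q" and tgtQ: "tgt t \<in> Q" if "t \<in> \<delta>" for t
    using GAd[of "src t" "inp t" "tgt t" "mt t"] that tr_eq[of t] by simp_all
  have finCs: "finite Cs" unfolding Cs_def using finite_range_rep by (rule finite_subset[rotated]) auto
  define Lam where "Lam = {Bnd q c | q c. q \<in> Q \<and> c \<in> Cs} \<union> {Gh t c k | t c k. t \<in> \<delta> \<and> c \<in> Cs \<and> k < length (ws t c)}"
  have finLam: "finite Lam"
  proof -
    have "{Bnd q c | q c. q \<in> Q \<and> c \<in> Cs} = (\<lambda>(q,c). Bnd q c) ` (Q \<times> Cs)" by auto
    moreover have "{Gh t c k | t c k. t \<in> \<delta> \<and> c \<in> Cs \<and> k < length (ws t c)} = (\<Union>t\<in>\<delta>. \<Union>c\<in>Cs. Gh t c ` {..<length (ws t c)})"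
      by auto
    moreover have "finite \<delta>" using GA unfolding G_automaton_def by simp
    ultimately show ?thesis unfolding Lam_def using GAf finCs by auto
  qed
  have tgtU: "fst (snd (snd x)) \<in> Lam" if "x \<in> U \<delta>" for x
  proof -
    from that obtain t c k where x: "x = ustep t c k" and t: "t \<in> \<delta>" and c: "c \<in> Cs" and k: "k < length (ws t c)"
      unfolding U_def by auto
    show ?thesis
    proof (cases "Suc k = length (ws t c)")
      case True
      then have "ws t c \<noteq> []" by auto
      then have "fst (snd (snd x)) = Bnd (tgt t) (cn t c)" using True by (simp add: x ustep_def ul_def)
      moreover have "cn t c \<in> Cs" using cn_Cs[OF Cs_det[OF c] dets[OF t]] .
      ultimately show ?thesis unfolding Lam_def using tgtQ[OF t] by auto
    next
      case False
      then have "fst (snd (snd x)) = Gh t c (Suc k)" by (simp add: x ustep_def ul_def)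
      moreover have "Suc k < length (ws t c)" using k False by simp
      ultimately show ?thesis unfolding Lam_def using t c by blast
    qed
  qed
  define K where "K = card Lam"
  define n where "n = Suc (W K (K * K))"
  define w where "w = replicate n 0 @ replicate n 1 @ replicate n (2::nat)"
  have "w \<in> Labc" unfolding Labc_def w_def by blast
  then obtain qf where qf: "qf \<in> Qa" "reach (**) (mat 1) \<delta> q0 qf w (mat 1)"
    unfolding LL accepted_lang_def by blast
  obtain xs c where xs: "uchain (Bnd q0 (mat 1)) xs (Bnd qf c)" "set xs \<subseteq> U \<delta>" "uw xs = w"
    "mat 1 = evl (ug xs) ** c" "c = rep (mat 1)"
    using complete[OF dets qf(2)] by blast
  have c1: "c = mat 1" using xs(5) by simp
  have ev1: "evl (ug xs) = mat 1" using xs(4) c1 by simp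
  have chx: "uchain (Bnd q0 (mat 1)) xs (Bnd qf (mat 1))" using xs(1) c1 by simp
  define N where "N = length xs"
  define lab where "lab = labf (Bnd q0 (mat 1)) xs"
  define stk where "stk p = foldl red [] (take p (ug xs))" for p
  define rd where "rd p = length (optl (fst (snd (xs ! p))))" for p
  have Xstk: "evl (stk p) = evl (ug (take p xs))" for p
    unfolding stk_def by (simp add: evl_foldl ug_def take_map)
  have labN: "lab N = Bnd qf (mat 1)"
    using uchain_take_drop[OF chx, of N] unfolding lab_def N_def by simp
  have seglen: "length (uw (take (b - a) (drop a xs))) = sum rd {a..<b}" if "b \<le> N" for a b
  proof -
    have "b \<le> length xs" using that unfolding N_def .
    then have "sum_list (map (\<lambda>x. length (optl (fst (snd x)))) (take (b - a) (drop a xs))) =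
       (\<Sum>p\<in>{a..<b}. length (optl (fst (snd (xs ! p)))))" by (rule sum_seg)
    then show ?thesis unfolding len_uw rd_def .
  qed
  have uwin: "uw ys \<in> Labc" if "uchain (Bnd q0 (mat 1)) ys (Bnd qf (mat 1))" "set ys \<subseteq> U \<delta>" "evl (ug ys) = mat 1" for ys
  proof -
    have "uinv \<delta> q0 (Bnd qf (mat 1)) ys" using sound[OF dets that(1,2)] .
    then have "reach (**) (mat 1) \<delta> q0 qf (uw ys) (mat 1)" using that(3) by (simp add: uinv_def)
    then show ?thesis unfolding LL accepted_lang_def using qf(1) by blast
  qed
  have NP: "sum rd {i..<j} + sum rd {k..<l} = 0"
    if ij: "i \<le> j" "j \<le> k" "k \<le> l" "l \<le> N" and lb: "lab i = lab j" "lab k = lab l"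
      and st: "stk i = stk l" "stk j = stk k" for i j k l
  proof (rule ccontr)
    assume pos: "sum rd {i..<j} + sum rd {k..<l} \<noteq> 0"
    define P0 where "P0 = take i xs"
    define S1 where "S1 = take (j - i) (drop i xs)"
    define S2 where "S2 = take (k - j) (drop j xs)"
    define S3 where "S3 = take (l - k) (drop k xs)"
    define P4 where "P4 = drop l xs"
    have tj: "take j xs = P0 @ S1" unfolding P0_def S1_def using take_split[OF ij(1)] .
    have tk: "take k xs = P0 @ S1 @ S2" using take_split[OF ij(2), of xs] tj unfolding S2_def by simp
    have tl: "take l xs = P0 @ S1 @ S2 @ S3" using take_split[OF ij(3), of xs] tk unfolding S3_def by simp
    have xsd: "xs = P0 @ S1 @ S2 @ S3 @ P4" using tl unfolding P4_def by (metis append.assoc append_take_drop_id)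
    have lN: "l \<le> length xs" using ij N_def by simp
    have iN: "i \<le> length xs" using ij lN by linarith
    have ch0: "uchain (Bnd q0 (mat 1)) P0 (lab i)" using conjunct1[OF uchain_take_drop[OF chx iN]]
      unfolding P0_def lab_def .
    have jN: "j \<le> length xs" "k \<le> length xs" using ij lN by linarith+
    have ch1: "uchain (lab i) S1 (lab j)" using uchain_seg[OF chx ij(1) jN(1)] unfolding S1_def lab_def .
    have ch2: "uchain (lab j) S2 (lab k)" using uchain_seg[OF chx ij(2) jN(2)] unfolding S2_def lab_def .
    have ch3: "uchain (lab k) S3 (lab l)" using uchain_seg[OF chx ij(3) lN] unfolding S3_def lab_def .
    have ch4: "uchain (lab l) P4 (Bnd qf (mat 1))" using conjunct2[OF uchain_take_drop[OF chx lN]]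
      unfolding P4_def lab_def .
    define ys where "ys = P0 @ S1 @ S1 @ S2 @ S3 @ S3 @ P4"
    have ch1': "uchain (lab i) S1 (lab i)" using ch1 lb(1) by simp
    have ch3': "uchain (lab k) S3 (lab k)" using ch3 lb(2) by simp
    have chy: "uchain (Bnd q0 (mat 1)) ys (Bnd qf (mat 1))"
    proof -
      have "uchain (lab k) (S3 @ P4) (Bnd qf (mat 1))" unfolding uchain_append using ch3 ch4 by blast
      then have "uchain (lab k) (S3 @ S3 @ P4) (Bnd qf (mat 1))" unfolding uchain_append using ch3' by blast
      then have "uchain (lab j) (S2 @ S3 @ S3 @ P4) (Bnd qf (mat 1))" unfolding uchain_append using ch2 by blast
      then have "uchain (lab i) (S1 @ S2 @ S3 @ S3 @ P4) (Bnd qf (mat 1))" unfolding uchain_append using ch1 by blast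
      then have "uchain (lab i) (S1 @ S1 @ S2 @ S3 @ S3 @ P4) (Bnd qf (mat 1))" unfolding uchain_append using ch1' by blast
      then show ?thesis unfolding ys_def uchain_append using ch0 by blast
    qed
    have sety: "set ys \<subseteq> U \<delta>"
    proof -
      have e: "set ys = set (P0 @ S1 @ S2 @ S3 @ P4)" unfolding ys_def by auto
      have "set ys \<subseteq> set xs" unfolding e using xsd by simp
      then show ?thesis using xs(2) by simp
    qed
    define X where "X a = evl (ug (take a xs))" for a
    define E1 where "E1 = evl (ug S1)"
    define E2 where "E2 = evl (ug S2)"
    define E3 where "E3 = evl (ug S3)"
    define E4 where "E4 = evl (ug P4)"
    have Xj: "X j = X i ** E1" unfolding X_def E1_def tj P0_def[symmetric] by (simp add: evl_append)
    have Xk: "X k = X j ** E2" unfolding X_def E2_def tk tj by (simp add: evl_append matrix_mul_assoc)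
    have Xl: "X l = X k ** E3" unfolding X_def E3_def tl tk by (simp add: evl_append matrix_mul_assoc)
    have XN: "X l ** E4 = mat 1"
    proof -
      have "X l ** E4 = evl (ug (take l xs @ drop l xs))" unfolding X_def E4_def P4_def ug_append evl_append ..
      then show ?thesis using ev1 by simp
    qed
    have Xil: "X i = X l" unfolding X_def Xstk[symmetric] st(1) ..
    have Xjk: "X j = X k" unfolding X_def Xstk[symmetric] st(2) ..
    have "X i ** E1 ** E1 ** E2 ** E3 ** E3 ** E4 = mat 1"
    proof (rule pump_alg)
      show "det (X i) = 1" "det (X j) = 1" by (simp_all add: X_def)
      show "X i ** E1 = X j" using Xj by simp
      show "X j ** E2 = X j" using Xk Xjk by simp
      show "X j ** E3 = X i" using Xl Xjk Xil by simp
      show "X i ** E4 = mat 1" using XN Xil by simp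
    qed
    moreover have "evl (ug ys) = X i ** E1 ** E1 ** E2 ** E3 ** E3 ** E4"
      unfolding ys_def X_def E1_def E2_def E3_def E4_def P0_def by (simp add: evl_append matrix_mul_assoc)
    ultimately have "uw ys \<in> Labc" using uwin[OF chy sety] by simp
    moreover have "uw xs \<in> Labc" using xs(3) \<open>w \<in> Labc\<close> by simp
    moreover have "uw xs = uw P0 @ uw S1 @ uw S2 @ uw S3 @ uw P4" by (subst xsd) simp
    moreover have "uw ys = uw P0 @ uw S1 @ uw S1 @ uw S2 @ uw S3 @ uw S3 @ uw P4" by (simp add: ys_def)
    ultimately have b1: "uw P0 @ uw S1 @ uw S2 @ uw S3 @ uw P4 \<in> Labc"
      and b2: "uw P0 @ uw S1 @ uw S1 @ uw S2 @ uw S3 @ uw S3 @ uw P4 \<in> Labc"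
      by simp_all
    have "length (uw S1) + length (uw S3) = sum rd {i..<j} + sum rd {k..<l}"
      using seglen[of j i] seglen[of l k] ij unfolding S1_def S3_def by simp
    then have "length (uw S1) + length (uw S3) > 0" using pos by linarith
    then show False using pump_contra[OF b1 b2] by simp
  qed
  have walkI: "walk N lab stk rd Lam"
  proof
    show "finite Lam" by (rule finLam)
    show "lab p \<in> Lam" if "p \<le> N" for p
    proof (cases "p = 0")
      case True then show ?thesis unfolding lab_def labf_def Lam_def using GAf by auto
    next
      case False
      then have "p - 1 < length xs" using that N_def by simp
      then have "xs ! (p - 1) \<in> set xs" by (rule nth_mem)
      then have "xs ! (p - 1) \<in> U \<delta>" using xs(2) by blast
      then show ?thesis using tgtU False unfolding lab_def labf_def by simp
    qed
    show "(\<exists>z. stk (Suc p) = stk p @ [z]) \<or> (\<exists>z. stk p = stk (Suc p) @ [z])" if "p < N" for p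
    proof -
      have "take (Suc p) (ug xs) = take p (ug xs) @ [ug xs ! p]" using that N_def
        by (simp add: take_Suc_conv_app_nth ug_def)
      then have "stk (Suc p) = red (stk p) (ug xs ! p)" unfolding stk_def by simp
      then show ?thesis using red_step by metis
    qed
    show "rd p \<le> 1" if "p < N" for p unfolding rd_def optl_def by (auto split: option.splits)
    show "sum rd {i..<j} + sum rd {k..<l} = 0"
      if "i \<le> j" "j \<le> k" "k \<le> l" "l \<le> N" "lab i = lab j" "lab k = lab l" "stk i = stk l" "stk j = stk k"
      for i j k l using NP that by blast
  qed
  have s0: "stk 0 = []" by (simp add: stk_def)
  have sN: "stk N = []"
  proof -
    have "successively (\<lambda>g h. h \<noteq> ginv g) (stk N)" unfolding stk_def by (rule succ_foldl) simp
    moreover have "evl (stk N) = mat 1" using Xstk[of N] ev1 N_def by simp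
    ultimately show ?thesis using free by blast
  qed
  have "sum rd {0..<N} \<le> W (card Lam) (card Lam * card Lam)" using walk.bound[OF walkI s0 sN] .
  moreover have "sum rd {0..<N} = length w" using seglen[of N 0] xs(3) N_def by simp
  moreover have "length w = 3 * n" unfolding w_def by simp
  ultimately show False unfolding n_def K_def by simp
qed

(* ---- part P3 ---- *)
definition mk3 :: "int \<Rightarrow> int \<Rightarrow> int \<Rightarrow> int \<Rightarrow> int \<Rightarrow> int \<Rightarrow> int \<Rightarrow> int \<Rightarrow> int \<Rightarrow> int^3^3" where
  "mk3 a b c d e f g h k = (\<chi> r s. if r = 1 then (if s = 1 then a else if s = 2 then b else c)
      else if r = 2 then (if s = 1 then d else if s = 2 then e else f)
      else (if s = 1 then g else if s = 2 then h else k))"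

lemma three_neq[simp]: "(1::3) \<noteq> 2" "(1::3) \<noteq> 3" "(2::3) \<noteq> 3" "(2::3) \<noteq> 1" "(3::3) \<noteq> 1" "(3::3) \<noteq> 2"
  by (simp_all add: eq_commute)

lemma mk3_nth[simp]:
  "mk3 a b c d e f g h k $ 1 $ 1 = a" "mk3 a b c d e f g h k $ 1 $ 2 = b" "mk3 a b c d e f g h k $ 1 $ 3 = c"
  "mk3 a b c d e f g h k $ 2 $ 1 = d" "mk3 a b c d e f g h k $ 2 $ 2 = e" "mk3 a b c d e f g h k $ 2 $ 3 = f"
  "mk3 a b c d e f g h k $ 3 $ 1 = g" "mk3 a b c d e f g h k $ 3 $ 2 = h" "mk3 a b c d e f g h k $ 3 $ 3 = k"
  by (simp_all add: mk3_def)

lemma mk3_eq: "mk3 a b c d e f g h k = mk3 a' b' c' d' e' f' g' h' k' \<longleftrightarrow>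
   a = a' \<and> b = b' \<and> c = c' \<and> d = d' \<and> e = e' \<and> f = f' \<and> g = g' \<and> h = h' \<and> k = k'"
  unfolding vec_eq_iff forall_3 by simp

lemma mk3_mult: "mk3 a b c d e f g h k ** mk3 a' b' c' d' e' f' g' h' k' =
  mk3 (a*a' + b*d' + c*g') (a*b' + b*e' + c*h') (a*c' + b*f' + c*k')
      (d*a' + e*d' + f*g') (d*b' + e*e' + f*h') (d*c' + e*f' + f*k')
      (g*a' + h*d' + k*g') (g*b' + h*e' + k*h') (g*c' + h*f' + k*k')"
  unfolding vec_eq_iff forall_3 by (simp add: matrix_matrix_mult_def sum_3)

lemma mk3_one: "(mat 1 :: int^3^3) = mk3 1 0 0 0 1 0 0 0 1"
  unfolding vec_eq_iff forall_3 by (simp add: mat_def)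

lemma mk3_det: "det (mk3 a b c d e f g h k) = a*e*k + b*f*g + c*d*h - a*f*h - b*d*k - c*e*g"
  by (simp add: det_3)

definition emb :: "int^2^2 \<Rightarrow> int^3^3" where
  "emb M = mk3 (M$1$1) (M$1$2) 0 (M$2$1) (M$2$2) 0 0 0 1"

lemma emb_mk2: "emb (mk2 a b c d) = mk3 a b 0 c d 0 0 0 1" by (simp add: emb_def)

lemma emb_mult: "emb (A ** B) = emb A ** emb B"
proof -
  obtain a b c d where A: "A = mk2 a b c d" using mk2_eta by metis
  obtain e f g h where B: "B = mk2 e f g h" using mk2_eta by metis
  show ?thesis unfolding A B mk2_mult emb_mk2 mk3_mult by simp
qed

lemma emb_one: "emb (mat 1) = mat 1" by (simp add: mk2_one emb_mk2 mk3_one)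

lemma emb_inj: "emb A = emb B \<Longrightarrow> A = B"
  apply (subst mk2_eta[of A]) apply (subst mk2_eta[of B])
  by (simp add: emb_def mk3_eq)

lemma emb_det: "det (emb A) = det A"
  by (simp add: emb_def mk3_det det_2)

definition T :: "int \<Rightarrow> int \<Rightarrow> int^3^3" where "T u v = mk3 1 u v 0 1 0 0 0 1"

lemma T_mult: "T u v ** T u' v' = T (u + u') (v + v')"
  by (simp add: T_def mk3_mult algebra_simps)

lemma T_one: "T 0 0 = mat 1" by (simp add: T_def mk3_one)
lemma T_eq: "T u v = T u' v' \<longleftrightarrow> u = u' \<and> v = v'" by (simp add: T_def mk3_eq)
lemma T_det: "det (T u v) = 1" by (simp add: T_def mk3_det)

(* ---- part P4 ---- *)
definition embT :: "(nat \<times> nat option \<times> nat \<times> (int^2^2)) set \<Rightarrow> (nat \<times> nat option \<times> nat \<times> (int^3^3)) set" where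
  "embT \<delta> = (\<lambda>(q,s,q',m). (q,s,q',emb m)) ` \<delta>"

lemma r23: "reach (**) (mat 1) \<delta> q0 q w x \<Longrightarrow> reach (**) (mat 1) (embT \<delta>) q0 q w (emb x)"
proof (induction rule: reach.induct)
  case start then show ?case using reach.start emb_one by metis
next
  case (read q w x a q' m)
  have "(q, Some a, q', emb m) \<in> embT \<delta>" using read.hyps(2) unfolding embT_def by force
  from reach.read[OF read.IH this] show ?case by (simp add: emb_mult)
next
  case (eps q w x q' m)
  have "(q, None, q', emb m) \<in> embT \<delta>" using eps.hyps(2) unfolding embT_def by force
  from reach.eps[OF eps.IH this] show ?case by (simp add: emb_mult)
qed

lemma r32: "reach (**) (mat 1) (embT \<delta>) q0 q w y \<Longrightarrow> \<exists>x. reach (**) (mat 1) \<delta> q0 q w x \<and> y = emb x"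
proof (induction rule: reach.induct)
  case start then show ?case using reach.start emb_one by metis
next
  case (read q w y a q' m3)
  then obtain x where x: "reach (**) (mat 1) \<delta> q0 q w x" "y = emb x" by blast
  from read.hyps(2) obtain m where m: "(q, Some a, q', m) \<in> \<delta>" "m3 = emb m" unfolding embT_def by auto
  show ?case using reach.read[OF x(1) m(1)] x(2) m(2) by (metis emb_mult)
next
  case (eps q w y q' m3)
  then obtain x where x: "reach (**) (mat 1) \<delta> q0 q w x" "y = emb x" by blast
  from eps.hyps(2) obtain m where m: "(q, None, q', m) \<in> \<delta>" "m3 = emb m" unfolding embT_def by auto
  show ?case using reach.eps[OF x(1) m(1)] x(2) m(2) by (metis emb_mult)
qed

lemma incl: "lang_class (SL_carrier :: (int^2^2) set) (**) (mat 1) \<subseteq> lang_class (SL_carrier :: (int^3^3) set) (**) (mat 1)"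
proof
  fix L assume "L \<in> lang_class (SL_carrier :: (int^2^2) set) (**) (mat 1)"
  then obtain Q \<Sigma> \<delta> q0 Qa where GA: "G_automaton (SL_carrier :: (int^2^2) set) Q \<Sigma> \<delta> q0 Qa"
    and LL: "L = accepted_lang (**) (mat 1) \<delta> q0 Qa" unfolding lang_class_def by blast
  have GA3: "G_automaton (SL_carrier :: (int^3^3) set) Q \<Sigma> (embT \<delta>) q0 Qa"
    using GA unfolding G_automaton_def embT_def SL_carrier_def by (auto simp: emb_det)
  have "L = accepted_lang (**) (mat 1) (embT \<delta>) q0 Qa"
  proof -
    have "(\<exists>q\<in>Qa. reach (**) (mat 1) \<delta> q0 q w (mat 1)) \<longleftrightarrow> (\<exists>q\<in>Qa. reach (**) (mat 1) (embT \<delta>) q0 q w (mat 1))" for w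
    proof
      assume "\<exists>q\<in>Qa. reach (**) (mat 1) \<delta> q0 q w (mat 1)"
      then show "\<exists>q\<in>Qa. reach (**) (mat 1) (embT \<delta>) q0 q w (mat 1)" using r23 emb_one by metis
    next
      assume "\<exists>q\<in>Qa. reach (**) (mat 1) (embT \<delta>) q0 q w (mat 1)"
      then obtain q x where "q \<in> Qa" "reach (**) (mat 1) \<delta> q0 q w x" "mat 1 = emb x" using r32 by metis
      then show "\<exists>q\<in>Qa. reach (**) (mat 1) \<delta> q0 q w (mat 1)" using emb_inj emb_one by metis
    qed
    then show ?thesis unfolding LL accepted_lang_def by simp
  qed
  then show "L \<in> lang_class (SL_carrier :: (int^3^3) set) (**) (mat 1)"
    unfolding lang_class_def using GA3 by blast
qed

definition d3 :: "(nat \<times> nat option \<times> nat \<times> (int^3^3)) set" where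
  "d3 = {(0, Some 0, 0, T 1 0), (0, None, 1, T 0 0), (1, Some 1, 1, T (-1) 1), (1, None, 2, T 0 0), (2, Some 2, 2, T 0 (-1))}"

definition Pinv :: "nat \<Rightarrow> nat list \<Rightarrow> int^3^3 \<Rightarrow> bool" where
  "Pinv q w y = ((q = 0 \<and> (\<exists>i. w = replicate i 0 \<and> y = T (int i) 0)) \<or>
     (q = 1 \<and> (\<exists>i j. w = replicate i 0 @ replicate j 1 \<and> y = T (int i - int j) (int j))) \<or>
     (q = 2 \<and> (\<exists>i j k. w = replicate i 0 @ replicate j 1 @ replicate k 2 \<and> y = T (int i - int j) (int j - int k))))"

lemma d3_inv: "reach (**) (mat 1) d3 0 q w y \<Longrightarrow> Pinv q w y"
proof (induction rule: reach.induct)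
  case start
  show ?case unfolding Pinv_def using T_one by (metis list.size(3) replicate_0 of_nat_0)
next
  case (read q w y a q' m)
  from read.hyps(2) consider "q = 0" "a = 0" "q' = 0" "m = T 1 0" | "q = 1" "a = 1" "q' = 1" "m = T (-1) 1"
    | "q = 2" "a = 2" "q' = 2" "m = T 0 (-1)" unfolding d3_def by auto
  then show ?case
  proof cases
    case 1
    then obtain i where "w = replicate i 0" "y = T (int i) 0" using read.IH unfolding Pinv_def by auto
    then have "w @ [a] = replicate (Suc i) 0" "y ** m = T (int (Suc i)) 0" using 1 by (simp_all add: T_mult replicate_append_same algebra_simps)
    then show ?thesis unfolding Pinv_def using 1 by blast
  next
    case 2
    then obtain i j where "w = replicate i 0 @ replicate j 1" "y = T (int i - int j) (int j)" using read.IH unfolding Pinv_def by auto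
    then have "w @ [a] = replicate i 0 @ replicate (Suc j) 1" "y ** m = T (int i - int (Suc j)) (int (Suc j))"
      using 2 by (simp_all add: T_mult replicate_append_same algebra_simps)
    then show ?thesis unfolding Pinv_def using 2 by blast
  next
    case 3
    then obtain i j k where "w = replicate i 0 @ replicate j 1 @ replicate k 2" "y = T (int i - int j) (int j - int k)"
      using read.IH unfolding Pinv_def by auto
    then have "w @ [a] = replicate i 0 @ replicate j 1 @ replicate (Suc k) 2" "y ** m = T (int i - int j) (int j - int (Suc k))"
      using 3 by (simp_all add: T_mult replicate_append_same algebra_simps)
    then show ?thesis unfolding Pinv_def using 3 by blast
  qed
next
  case (eps q w y q' m)
  from eps.hyps(2) consider "q = 0" "q' = 1" "m = T 0 0" | "q = 1" "q' = 2" "m = T 0 0" unfolding d3_def by auto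
  then show ?case
  proof cases
    case 1
    then obtain i where "w = replicate i 0" "y = T (int i) 0" using eps.IH unfolding Pinv_def by auto
    then have "w = replicate i 0 @ replicate 0 1" "y ** m = T (int i - int 0) (int 0)" using 1 by (simp_all add: T_mult)
    then show ?thesis unfolding Pinv_def using 1 by blast
  next
    case 2
    then obtain i j where "w = replicate i 0 @ replicate j 1" "y = T (int i - int j) (int j)" using eps.IH unfolding Pinv_def by auto
    then have "w = replicate i 0 @ replicate j 1 @ replicate 0 2" "y ** m = T (int i - int j) (int j - int 0)" using 2 by (simp_all add: T_mult)
    then show ?thesis unfolding Pinv_def using 2 by blast
  qed
qed

lemma d3_r0: "reach (**) (mat 1) d3 0 0 (replicate i 0) (T (int i) 0)"
proof (induction i)
  case 0 then show ?case using reach.start T_one by (metis list.size(3) replicate_0 of_nat_0)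
next
  case (Suc i)
  have "(0, Some 0, 0, T 1 0) \<in> d3" by (simp add: d3_def)
  from reach.read[OF Suc this] show ?case by (simp add: T_mult replicate_append_same add.commute)
qed

lemma d3_r1: "reach (**) (mat 1) d3 0 1 (replicate i 0 @ replicate j 1) (T (int i - int j) (int j))"
proof (induction j)
  case 0
  have "(0, None, 1, T 0 0) \<in> d3" by (simp add: d3_def)
  from reach.eps[OF d3_r0 this] show ?case by (simp add: T_mult)
next
  case (Suc j)
  have "(1, Some 1, 1, T (-1) 1) \<in> d3" by (simp add: d3_def)
  from reach.read[OF Suc this] show ?case by (simp add: T_mult replicate_append_same algebra_simps)
qed

lemma d3_r2: "reach (**) (mat 1) d3 0 2 (replicate i 0 @ replicate j 1 @ replicate k 2) (T (int i - int j) (int j - int k))"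
proof (induction k)
  case 0
  have "(1, None, 2, T 0 0) \<in> d3" by (simp add: d3_def)
  from reach.eps[OF d3_r1 this] show ?case by (simp add: T_mult)
next
  case (Suc k)
  have "(2, Some 2, 2, T 0 (-1)) \<in> d3" by (simp add: d3_def)
  from reach.read[OF Suc this] show ?case by (simp add: T_mult replicate_append_same algebra_simps)
qed

lemma Labc_SL3: "Labc \<in> lang_class (SL_carrier :: (int^3^3) set) (**) (mat 1)"
proof -
  have GA: "G_automaton (SL_carrier :: (int^3^3) set) {0,1,2} {0,1,2} d3 0 {2}"
    unfolding G_automaton_def SL_carrier_def d3_def by (auto simp: T_det)
  have "Labc = accepted_lang (**) (mat 1) d3 0 {2}"
  proof
    show "Labc \<subseteq> accepted_lang (**) (mat 1) d3 0 {2}"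
    proof
      fix w assume "w \<in> Labc"
      then obtain n where w: "w = replicate n 0 @ replicate n 1 @ replicate n 2" unfolding Labc_def by blast
      have "reach (**) (mat 1) d3 0 2 w (mat 1)" using d3_r2[of n n n] w T_one by simp
      then show "w \<in> accepted_lang (**) (mat 1) d3 0 {2}" unfolding accepted_lang_def by blast
    qed
  next
    show "accepted_lang (**) (mat 1) d3 0 {2} \<subseteq> Labc"
    proof
      fix w assume "w \<in> accepted_lang (**) (mat 1) d3 0 {2}"
      then have "Pinv 2 w (mat 1)" unfolding accepted_lang_def using d3_inv by blast
      then obtain i j k where "w = replicate i 0 @ replicate j 1 @ replicate k 2" "mat 1 = T (int i - int j) (int j - int k)"
        unfolding Pinv_def by auto
      then have "w = replicate i 0 @ replicate i 1 @ replicate i 2" using T_one T_eq by (metis eq_iff_diff_eq_0 of_nat_eq_iff)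
      then show "w \<in> Labc" unfolding Labc_def by blast
    qed
  qed
  then show ?thesis unfolding lang_class_def using GA by blast
qed

theorem theorem3p8:
  shows "lang_class (SL_carrier :: (int^2^2) set) (**) (mat 1)
         \<subset> lang_class (SL_carrier :: (int^3^3) set) (**) (mat 1)"
proof -
  have "Labc \<in> lang_class (SL_carrier :: (int^3^3) set) (**) (mat 1)" by (rule Labc_SL3)
  moreover have "Labc \<notin> lang_class (SL_carrier :: (int^2^2) set) (**) (mat 1)" by (rule not_SL2)
  ultimately show ?thesis using incl by blast
qed

end
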